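(* Let $\Sigma$ be an oriented graph with $\det W(\Sigma)\neq 0$. Then there exists a unique regular rational orthogonal matrix $Q_0\in\mathcal{Q}(\Sigma)$ such that $Q_0^{\rm T}S(\Sigma)Q_0=S(\Sigma^{\rm T})$. Moreover, if $\Sigma$ is not isomorphic to $\Sigma^{\rm T}$, then $Q_0$ is not a permutation matrix.
   Context: An oriented graph on vertices $v_1,\dots,v_n$ is a simple graph with each edge directed. Its skew-adjacency matrix $S(\Sigma)=(s_{ij})$ has $s_{ij}=1$ if $(v_i,v_j)$ is an arc, $-1$ if $(v_j,v_i)$ is an arc, $0$ otherwise. The converse $\Sigma^{\rm T}$ reverses every arc, so $S(\Sigma^{\rm T})=-S(\Sigma)$. Two oriented graphs are isomorphic if their skew-adjacency matrices are conjugate by a permutation matrix; they are generalized cospectral if their skew-adjacency matrices $S$ have the same spectrum and the matrices $J-I-S$ have the same spectrum. With $e$ the all-one vector, $W(\Sigma)=[e,Se,\dots,S^{n-1}e]$, $S=S(\Sigma)$. A rational orthogonal matrix $Q$ is regular if $Qe=e$. $\mathcal{Q}(\Sigma)$ is the set of regular rational orthogonal $Q$ with $Q^{\rm T}S(\Sigma)Q=S(\Delta)$ for some oriented graph $\Delta$ generalized cospectral with $\Sigma$. *)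

theory Defs
  imports "Jordan_Normal_Form.Matrix" "Jordan_Normal_Form.Determinant" "Jordan_Normal_Form.Char_Poly"
begin

(* An oriented graph on vertices 0..n-1, given by its arc relation:
   arc A i j means (v_i, v_j) is an arc. Simple: no loops, no pair of opposite arcs. *)
definition oriented_graph :: "nat \<Rightarrow> (nat \<Rightarrow> nat \<Rightarrow> bool) \<Rightarrow> bool" where
  "oriented_graph n A \<longleftrightarrow>
     (\<forall>i j. A i j \<longrightarrow> i < n \<and> j < n \<and> i \<noteq> j \<and> \<not> A j i)"

definition converse_og :: "(nat \<Rightarrow> nat \<Rightarrow> bool) \<Rightarrow> (nat \<Rightarrow> nat \<Rightarrow> bool)" where
  "converse_og A = (\<lambda>i j. A j i)"

definition skew_adj :: "nat \<Rightarrow> (nat \<Rightarrow> nat \<Rightarrow> bool) \<Rightarrow> real mat" where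
  "skew_adj n A = mat n n (\<lambda>(i,j). if A i j then 1 else if A j i then -1 else 0)"

definition ones_vec :: "nat \<Rightarrow> real vec" where
  "ones_vec n = vec n (\<lambda>_. 1)"

definition J_mat :: "nat \<Rightarrow> real mat" where
  "J_mat n = mat n n (\<lambda>_. 1)"

definition walk_mat :: "nat \<Rightarrow> (nat \<Rightarrow> nat \<Rightarrow> bool) \<Rightarrow> real mat" where
  "walk_mat n A = mat_of_cols n (map (\<lambda>k. (skew_adj n A ^\<^sub>m k) *\<^sub>v ones_vec n) [0..<n])"

(* spectrum as multiset of eigenvalues = characteristic polynomial *)
definition gen_cospectral :: "nat \<Rightarrow> (nat \<Rightarrow> nat \<Rightarrow> bool) \<Rightarrow> (nat \<Rightarrow> nat \<Rightarrow> bool) \<Rightarrow> bool" where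
  "gen_cospectral n A B \<longleftrightarrow>
     char_poly (skew_adj n A) = char_poly (skew_adj n B) \<and>
     char_poly (J_mat n - 1\<^sub>m n - skew_adj n A) = char_poly (J_mat n - 1\<^sub>m n - skew_adj n B)"

definition rational_mat :: "real mat \<Rightarrow> bool" where
  "rational_mat Q \<longleftrightarrow> (\<forall>i < dim_row Q. \<forall>j < dim_col Q. Q $$ (i,j) \<in> \<rat>)"

definition orth_mat :: "nat \<Rightarrow> real mat \<Rightarrow> bool" where
  "orth_mat n Q \<longleftrightarrow> Q \<in> carrier_mat n n \<and> transpose_mat Q * Q = 1\<^sub>m n"

definition regular_mat :: "nat \<Rightarrow> real mat \<Rightarrow> bool" where
  "regular_mat n Q \<longleftrightarrow> Q *\<^sub>v ones_vec n = ones_vec n"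

definition QSet :: "nat \<Rightarrow> (nat \<Rightarrow> nat \<Rightarrow> bool) \<Rightarrow> real mat set" where
  "QSet n A = {Q. orth_mat n Q \<and> rational_mat Q \<and> regular_mat n Q \<and>
     (\<exists>D. oriented_graph n D \<and> gen_cospectral n A D \<and>
          transpose_mat Q * skew_adj n A * Q = skew_adj n D)}"

definition perm_matrix :: "nat \<Rightarrow> real mat \<Rightarrow> bool" where
  "perm_matrix n P \<longleftrightarrow> (\<exists>p. p permutes {..<n} \<and>
     P = mat n n (\<lambda>(i,j). if i = p j then 1 else 0))"

definition iso_og :: "nat \<Rightarrow> (nat \<Rightarrow> nat \<Rightarrow> bool) \<Rightarrow> (nat \<Rightarrow> nat \<Rightarrow> bool) \<Rightarrow> bool" where
  "iso_og n A B \<longleftrightarrow> (\<exists>P. perm_matrix n P \<and>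
     transpose_mat P * skew_adj n A * P = skew_adj n B)"

end

theory Submission imports Defs begin

lemma skew_carrier[simp]: "skew_adj n A \<in> carrier_mat n n" unfolding skew_adj_def by auto
lemma ones_carrier[simp]: "ones_vec n \<in> carrier_vec n" unfolding ones_vec_def by auto

lemma pow_Suc_left: assumes M: "M \<in> carrier_mat n n" shows "M ^\<^sub>m Suc k = M * M ^\<^sub>m k"
proof (induct k)
  case 0 show ?case using M by simp
next
  case (Suc k)
  have "M ^\<^sub>m Suc (Suc k) = (M * M ^\<^sub>m k) * M" using Suc by simp
  also have "\<dots> = M * (M ^\<^sub>m k * M)" using M by (simp add: assoc_mult_mat[of _ n n _ n _ n])
  finally show ?case by simp
qed

lemma skew_conv: "skew_adj n (converse_og A) = transpose_mat (skew_adj n A)"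
  unfolding skew_adj_def converse_og_def by (rule eq_matI) auto

lemma skew_transpose: assumes "oriented_graph n A"
  shows "transpose_mat (skew_adj n A) = - skew_adj n A"
  using assms unfolding skew_adj_def oriented_graph_def by (intro eq_matI) auto

lemma skew_scalar:
  fixes S :: "real mat"
  assumes S: "S \<in> carrier_mat n n" and St: "transpose_mat S = - S"
    and u: "u \<in> carrier_vec n" and v: "v \<in> carrier_vec n"
  shows "(S *\<^sub>v u) \<bullet> v = - (u \<bullet> (S *\<^sub>v v))"
proof -
  have Su: "S *\<^sub>v u \<in> carrier_vec n" using S u by (rule mult_mat_vec_carrier)
  have Sv: "S *\<^sub>v v \<in> carrier_vec n" using S v by (rule mult_mat_vec_carrier)
  have "(S *\<^sub>v u) \<bullet> v = v \<bullet> (S *\<^sub>v u)" by (rule comm_scalar_prod[OF Su v])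
  also have "\<dots> = (transpose_mat S *\<^sub>v v) \<bullet> u"
    by (rule transpose_vec_mult_scalar[symmetric, OF S u v])
  also have "transpose_mat S *\<^sub>v v = - (S *\<^sub>v v)" unfolding St
    by (rule uminus_mult_mat_vec, insert S v, simp)
  also have "(- (S *\<^sub>v v)) \<bullet> u = - ((S *\<^sub>v v) \<bullet> u)"
    by (rule uminus_scalar_prod[symmetric, OF Sv u])
  also have "(S *\<^sub>v v) \<bullet> u = u \<bullet> (S *\<^sub>v v)" by (rule comm_scalar_prod[OF Sv u])
  finally show ?thesis .
qed

definition wv :: "real mat \<Rightarrow> real vec \<Rightarrow> nat \<Rightarrow> real vec" where
  "wv S e k = (S ^\<^sub>m k) *\<^sub>v e"

lemma wv_carrier': "S \<in> carrier_mat n n \<Longrightarrow> e \<in> carrier_vec n \<Longrightarrow> wv S e k \<in> carrier_vec n"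
  unfolding wv_def by (rule mult_mat_vec_carrier[OF pow_carrier_mat])

context
  fixes S :: "real mat" and e :: "real vec" and n :: nat
  assumes S: "S \<in> carrier_mat n n" and St: "transpose_mat S = - S" and e: "e \<in> carrier_vec n"
begin

lemma wv_carrier[simp]: "wv S e k \<in> carrier_vec n"
  unfolding wv_def by (rule mult_mat_vec_carrier[OF pow_carrier_mat[OF S] e])

lemma wv_0: "wv S e 0 = e" unfolding wv_def using S e by simp

lemma wv_Suc: "wv S e (Suc k) = S *\<^sub>v wv S e k"
  unfolding wv_def pow_Suc_left[OF S] by (rule assoc_mult_mat_vec[OF S pow_carrier_mat[OF S] e])

lemma f_step: "wv S e (Suc i) \<bullet> wv S e j = - (wv S e i \<bullet> wv S e (Suc j))"
  unfolding wv_Suc by (rule skew_scalar[OF S St wv_carrier wv_carrier])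

lemma f_shift: "wv S e i \<bullet> wv S e j = (-1)^i * (e \<bullet> wv S e (i+j))"
proof (induct i arbitrary: j)
  case 0 thus ?case by (simp add: wv_0)
next
  case (Suc i)
  have "wv S e (Suc i) \<bullet> wv S e j = - (wv S e i \<bullet> wv S e (Suc j))" by (rule f_step)
  also have "\<dots> = - ((-1)^i * (e \<bullet> wv S e (i + Suc j)))" using Suc by simp
  finally show ?case by simp
qed

lemma f_mid: "wv S e m \<bullet> wv S e (Suc m) = 0"
proof -
  have "wv S e (Suc m) \<bullet> wv S e m = - (wv S e m \<bullet> wv S e (Suc m))" by (rule f_step)
  moreover have "wv S e (Suc m) \<bullet> wv S e m = wv S e m \<bullet> wv S e (Suc m)"
    by (rule comm_scalar_prod[OF wv_carrier wv_carrier])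
  ultimately show ?thesis by simp
qed

lemma f_odd: assumes "odd k" shows "e \<bullet> wv S e k = 0"
proof -
  obtain m where "k = 2 * m + 1" using assms oddE by blast
  hence k: "k = m + Suc m" by simp
  have "wv S e m \<bullet> wv S e (Suc m) = (-1)^m * (e \<bullet> wv S e k)" unfolding k by (rule f_shift)
  with f_mid[of m] show ?thesis by simp
qed

lemma f_sign1: "((-1)^i * (-1)^j) * (wv S e i \<bullet> wv S e j) = wv S e i \<bullet> wv S e j"
proof (cases "even (i+j)")
  case True
  hence "((-1::real)^i * (-1)^j) = 1" by (simp add: power_add[symmetric])
  thus ?thesis by simp
next
  case False
  hence z: "e \<bullet> wv S e (i+j) = 0" by (intro f_odd) simp
  have "wv S e i \<bullet> wv S e j = 0" unfolding f_shift[of i j] z by simp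
  thus ?thesis by simp
qed

lemma f_sign2: "((-1)^i * (-1)^j) * (wv S e i \<bullet> wv S e (Suc j)) = - (wv S e i \<bullet> wv S e (Suc j))"
proof (cases "even (i+j)")
  case True
  hence z: "e \<bullet> wv S e (i + Suc j) = 0" by (intro f_odd) simp
  have "wv S e i \<bullet> wv S e (Suc j) = 0" unfolding f_shift[of i "Suc j"] z by simp
  thus ?thesis by simp
next
  case False
  hence "((-1::real)^i * (-1)^j) = -1" by (simp add: power_add[symmetric])
  thus ?thesis by simp
qed

end

lemma gram_entry:
  fixes M X :: "real mat"
  assumes M: "M \<in> carrier_mat n n" and X: "X \<in> carrier_mat n n" and i: "i < n" and j: "j < n"
  shows "(transpose_mat M * X * M) $$ (i,j) = col M i \<bullet> (X *\<^sub>v col M j)"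
proof -
  have "transpose_mat M * X * M = transpose_mat M * (X * M)"
    by (rule assoc_mult_mat[of _ n n _ n _ n], insert M X, auto)
  also have "\<dots> $$ (i,j) = row (transpose_mat M) i \<bullet> col (X * M) j"
    using M X i j by (intro index_mult_mat(1)) auto
  also have "row (transpose_mat M) i = col M i" using M i by (intro row_transpose) auto
  also have "col (X * M) j = X *\<^sub>v col M j" using M X j by (intro col_mult2) auto
  finally show ?thesis .
qed

lemma gram_entry1:
  fixes M :: "real mat"
  assumes M: "M \<in> carrier_mat n n" and i: "i < n" and j: "j < n"
  shows "(transpose_mat M * M) $$ (i,j) = col M i \<bullet> col M j"
proof -
  have "(transpose_mat M * M) $$ (i,j) = row (transpose_mat M) i \<bullet> col M j"
    using M i j by (intro index_mult_mat(1)) auto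
  also have "row (transpose_mat M) i = col M i" using M i by (intro row_transpose) auto
  finally show ?thesis .
qed

lemma rat_mult:
  assumes M: "M \<in> carrier_mat nr n" and N: "N \<in> carrier_mat n nc"
    and rM: "rational_mat M" and rN: "rational_mat N"
  shows "rational_mat (M * N)"
  unfolding rational_mat_def
proof (intro allI impI)
  fix i j assume i: "i < dim_row (M * N)" and j: "j < dim_col (M * N)"
  have "(M * N) $$ (i,j) = (\<Sum>k\<in>{0..<n}. M $$ (i,k) * N $$ (k,j))"
    using M N i j by (simp add: scalar_prod_def)
  also have "\<dots> \<in> \<rat>" using M N i j rM rN unfolding rational_mat_def
    by (intro Rats_sum Rats_mult) auto
  finally show "(M * N) $$ (i,j) \<in> \<rat>" .
qed

lemma rat_ex: assumes "rational_mat M" shows "\<exists>Mq. M = map_mat of_rat Mq"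
proof (intro exI eq_matI)
  fix i j assume i: "i < dim_row (map_mat of_rat (map_mat (\<lambda>x. SOME q. x = of_rat q) M))"
    and j: "j < dim_col (map_mat of_rat (map_mat (\<lambda>x. SOME q. x = of_rat q) M) :: real mat)"
  have "M $$ (i,j) \<in> \<rat>" using assms i j unfolding rational_mat_def by auto
  then obtain q where q: "M $$ (i,j) = of_rat q" by (auto elim: Rats_cases)
  hence "M $$ (i,j) = of_rat (SOME q. M $$ (i,j) = of_rat q)" by (rule someI)
  thus "M $$ (i, j) = map_mat of_rat (map_mat (\<lambda>x. SOME q. x = of_rat q) M) $$ (i, j)"
    using i j by simp
qed auto

lemma rat_map: "rational_mat (map_mat of_rat Mq)"
  unfolding rational_mat_def by auto


lemma rat_one: "rational_mat (1\<^sub>m n)" unfolding rational_mat_def by auto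

lemma main_facts:
  fixes n :: nat and A :: "nat \<Rightarrow> nat \<Rightarrow> bool"
  assumes og: "oriented_graph n A"
    and dW: "det (walk_mat n A) \<noteq> 0"
  defines "S \<equiv> skew_adj n A" and "e \<equiv> ones_vec n" and "W \<equiv> walk_mat n A"
  shows "\<exists>Wt V. Wt \<in> carrier_mat n n \<and> V \<in> carrier_mat n n \<and> W \<in> carrier_mat n n \<and>
     W * V = 1\<^sub>m n \<and> V * W = 1\<^sub>m n \<and> rational_mat Wt \<and> rational_mat V \<and>
     (\<forall>k<n. col W k = wv S e k \<and> col Wt k = (-1)^k \<cdot>\<^sub>v wv S e k)"
proof -
  have Sc: "S \<in> carrier_mat n n" unfolding S_def by simp
  have ec: "e \<in> carrier_vec n" unfolding e_def by simp
  have Wc: "W \<in> carrier_mat n n" unfolding W_def walk_mat_def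
    using mat_of_cols_carrier(1)[of n "map (\<lambda>k. (skew_adj n A ^\<^sub>m k) *\<^sub>v ones_vec n) [0..<n]"] by simp
  have colW: "col W k = wv S e k" if k: "k < n" for k
    unfolding W_def walk_mat_def wv_def S_def e_def
    by (subst col_mat_of_cols) (use k in \<open>auto intro: mult_mat_vec_carrier[of _ n n]\<close>)
  have Went: "W $$ (i,k) = wv S e k $ i" if "i < n" "k < n" for i k
    using colW[of k] that Wc by (metis carrier_matD(1) carrier_matD(2) col_def index_vec)
  define Wt where "Wt = mat n n (\<lambda>(i,k). (-1)^k * W $$ (i,k))"
  have Wtc: "Wt \<in> carrier_mat n n" unfolding Wt_def by simp
  have colWt: "col Wt k = (-1)^k \<cdot>\<^sub>v wv S e k" if k: "k < n" for k
    using k Went wv_carrier'[OF Sc ec, of k] unfolding Wt_def by (intro eq_vecI) (auto simp: col_def)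
  have rS: "rational_mat S" unfolding rational_mat_def S_def skew_adj_def by auto
  have rSk: "rational_mat (S ^\<^sub>m k)" for k
  proof (induct k)
    case 0 show ?case using Sc rat_one[of n] by simp
  next
    case (Suc k) show ?case using rat_mult[OF pow_carrier_mat[OF Sc, of k] Sc Suc rS] by simp
  qed
  have rW: "rational_mat W" unfolding rational_mat_def
  proof (intro allI impI)
    fix i k assume i: "i < dim_row W" and k: "k < dim_col W"
    have "W $$ (i,k) = (\<Sum>j\<in>{0..<n}. (S ^\<^sub>m k) $$ (i,j) * e $ j)"
      using i k Wc Sc ec unfolding Went[OF i[unfolded carrier_matD(1)[OF Wc]] k[unfolded carrier_matD(2)[OF Wc]]] wv_def
      by (simp add: scalar_prod_def)
    also have "\<dots> \<in> \<rat>" using rSk[of k] Sc i Wc unfolding rational_mat_def e_def ones_vec_def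
      by (intro Rats_sum Rats_mult) auto
    finally show "W $$ (i,k) \<in> \<rat>" .
  qed
  have rWt: "rational_mat Wt" using rW Wc unfolding rational_mat_def Wt_def by auto
  obtain Wq where Wq: "W = map_mat of_rat Wq" using rat_ex[OF rW] by blast
  have Wqc: "Wq \<in> carrier_mat n n" using Wc Wq by simp
  have "det Wq \<noteq> 0" using dW unfolding W_def[symmetric] Wq of_rat_hom.hom_det by simp
  from det_non_zero_imp_unit[OF Wqc this, of undefined]
  obtain Vq where Vqc: "Vq \<in> carrier_mat n n" and VW: "Vq * Wq = 1\<^sub>m n" and WV: "Wq * Vq = 1\<^sub>m n"
    unfolding Units_def ring_mat_simps by auto
  define V where "V = map_mat (of_rat :: rat \<Rightarrow> real) Vq"
  have Vc: "V \<in> carrier_mat n n" unfolding V_def using Vqc by simp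
  have "W * V = 1\<^sub>m n" unfolding Wq V_def of_rat_hom.mat_hom_mult[OF Wqc Vqc, symmetric] WV
    by (rule of_rat_hom.mat_hom_one)
  moreover have "V * W = 1\<^sub>m n" unfolding Wq V_def of_rat_hom.mat_hom_mult[OF Vqc Wqc, symmetric] VW
    by (rule of_rat_hom.mat_hom_one)
  moreover have "rational_mat V" unfolding V_def by (rule rat_map)
  ultimately show ?thesis using Wtc Vc Wc rWt colW colWt by blast
qed


theorem proposition2p5:
  fixes n :: nat and A :: "nat \<Rightarrow> nat \<Rightarrow> bool"
  assumes "oriented_graph n A"
    and "det (walk_mat n A) \<noteq> 0"
  shows "(\<exists>!Q0. Q0 \<in> QSet n A \<and>
            transpose_mat Q0 * skew_adj n A * Q0 = skew_adj n (converse_og A))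
         \<and> (\<not> iso_og n A (converse_og A) \<longrightarrow>
            (\<forall>Q0. Q0 \<in> QSet n A \<and>
               transpose_mat Q0 * skew_adj n A * Q0 = skew_adj n (converse_og A)
               \<longrightarrow> \<not> perm_matrix n Q0))"
proof -
  note og = assms(1)
  define S where "S = skew_adj n A"
  define e where "e = ones_vec n"
  define W where "W = walk_mat n A"
  have Sc: "S \<in> carrier_mat n n" unfolding S_def by simp
  have ec: "e \<in> carrier_vec n" unfolding e_def by simp
  have St: "transpose_mat S = - S" unfolding S_def by (rule skew_transpose[OF og])
  have Sconv: "skew_adj n (converse_og A) = - S" unfolding skew_conv S_def[symmetric] St ..
  obtain Wt V where Wtc: "Wt \<in> carrier_mat n n" and Vc: "V \<in> carrier_mat n n"
    and Wc: "W \<in> carrier_mat n n" and WV: "W * V = 1\<^sub>m n" and VW: "V * W = 1\<^sub>m n"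
    and rWt: "rational_mat Wt" and rV: "rational_mat V"
    and cols: "\<And>k. k < n \<Longrightarrow> col W k = wv S e k \<and> col Wt k = (-1)^k \<cdot>\<^sub>v wv S e k"
    using main_facts[OF assms] unfolding S_def e_def W_def by blast
  have wc: "wv S e k \<in> carrier_vec n" for k by (rule wv_carrier[OF Sc St ec])
  define Q0 where "Q0 = Wt * V"
  have Qc: "Q0 \<in> carrier_mat n n" unfolding Q0_def using Wtc Vc by simp
  have rQ: "rational_mat Q0" unfolding Q0_def by (rule rat_mult[OF Wtc Vc rWt rV])
  have QW: "Q0 * W = Wt" unfolding Q0_def using Wtc Vc Wc VW by simp
  have G1: "transpose_mat Wt * Wt = transpose_mat W * W"
  proof (rule eq_matI)
    fix i j assume i: "i < dim_row (transpose_mat W * W)" and j: "j < dim_col (transpose_mat W * W)"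
    hence i: "i < n" and j: "j < n" using Wc by auto
    have "(transpose_mat Wt * Wt) $$ (i,j) = col Wt i \<bullet> col Wt j" by (rule gram_entry1[OF Wtc i j])
    also have "\<dots> = ((-1)^i * (-1)^j) * (wv S e i \<bullet> wv S e j)"
      using cols[OF i] cols[OF j] wc[of i] wc[of j] by simp
    also have "\<dots> = wv S e i \<bullet> wv S e j" by (rule f_sign1[OF Sc St ec])
    also have "\<dots> = (transpose_mat W * W) $$ (i,j)" using gram_entry1[OF Wc i j] cols[OF i] cols[OF j] by simp
    finally show "(transpose_mat Wt * Wt) $$ (i,j) = (transpose_mat W * W) $$ (i,j)" .
  qed (insert Wc Wtc, auto)
  have G2: "transpose_mat Wt * S * Wt = - (transpose_mat W * S * W)"
  proof (rule eq_matI)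
    fix i j assume i: "i < dim_row (- (transpose_mat W * S * W))" and j: "j < dim_col (- (transpose_mat W * S * W))"
    hence i: "i < n" and j: "j < n" using Wc by auto
    have "(transpose_mat Wt * S * Wt) $$ (i,j) = col Wt i \<bullet> (S *\<^sub>v col Wt j)" by (rule gram_entry[OF Wtc Sc i j])
    also have "S *\<^sub>v col Wt j = (-1)^j \<cdot>\<^sub>v wv S e (Suc j)"
      using cols[OF j] mult_mat_vec[OF Sc wc[of j]] wv_Suc[OF Sc St ec] by simp
    also have "col Wt i \<bullet> \<dots> = ((-1)^i * (-1)^j) * (wv S e i \<bullet> wv S e (Suc j))"
      using cols[OF i] wc[of i] wc[of "Suc j"] by simp
    also have "\<dots> = - (wv S e i \<bullet> wv S e (Suc j))" by (rule f_sign2[OF Sc St ec])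
    also have "\<dots> = - ((transpose_mat W * S * W) $$ (i,j))"
      using gram_entry[OF Wc Sc i j] cols[OF i] cols[OF j] wv_Suc[OF Sc St ec] by simp
    also have "\<dots> = (- (transpose_mat W * S * W)) $$ (i,j)" using i j Wc Sc by simp
    finally show "(transpose_mat Wt * S * Wt) $$ (i,j) = (- (transpose_mat W * S * W)) $$ (i,j)" .
  qed (insert Wc Wtc, auto)
  have tWV: "transpose_mat V * transpose_mat W = 1\<^sub>m n"
    using transpose_mult[OF Wc Vc] WV by simp
  have tc: "transpose_mat V \<in> carrier_mat n n" "transpose_mat W \<in> carrier_mat n n" "transpose_mat Wt \<in> carrier_mat n n"
    using Vc Wc Wtc by auto
  have WVc: "W * V \<in> carrier_mat n n" "Wt * V \<in> carrier_mat n n" using Wc Vc Wtc by auto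
  have orth: "transpose_mat Q0 * Q0 = 1\<^sub>m n"
  proof -
    have "transpose_mat Q0 * Q0 = (transpose_mat V * transpose_mat Wt) * (Wt * V)"
      unfolding Q0_def transpose_mult[OF Wtc Vc] ..
    also have "\<dots> = transpose_mat V * (transpose_mat Wt * (Wt * V))"
      by (rule assoc_mult_mat[OF tc(1) tc(3) WVc(2)])
    also have "transpose_mat Wt * (Wt * V) = (transpose_mat Wt * Wt) * V"
      by (rule assoc_mult_mat[OF tc(3) Wtc Vc, symmetric])
    also have "\<dots> = transpose_mat W * (W * V)" unfolding G1
      by (rule assoc_mult_mat[OF tc(2) Wc Vc])
    also have "transpose_mat V * \<dots> = (transpose_mat V * transpose_mat W) * (W * V)"
      by (rule assoc_mult_mat[OF tc(1) tc(2) WVc(1), symmetric])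
    finally show ?thesis unfolding tWV WV by simp
  qed
  have skew: "transpose_mat Q0 * S * Q0 = - S"
  proof -
    have "transpose_mat Q0 * S * Q0 = (transpose_mat V * transpose_mat Wt) * S * (Wt * V)"
      unfolding Q0_def transpose_mult[OF Wtc Vc] ..
    also have "\<dots> = transpose_mat V * (transpose_mat Wt * S * Wt) * V"
    proof -
      have c1: "transpose_mat Wt * S \<in> carrier_mat n n" using tc Sc by simp
      have "(transpose_mat V * transpose_mat Wt) * S = transpose_mat V * (transpose_mat Wt * S)"
        by (rule assoc_mult_mat[OF tc(1) tc(3) Sc])
      hence "(transpose_mat V * transpose_mat Wt) * S * (Wt * V) = transpose_mat V * (transpose_mat Wt * S) * (Wt * V)" by simp
      also have "\<dots> = transpose_mat V * ((transpose_mat Wt * S) * (Wt * V))"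
        by (rule assoc_mult_mat[OF tc(1) c1 WVc(2)])
      also have "(transpose_mat Wt * S) * (Wt * V) = (transpose_mat Wt * S * Wt) * V"
        by (rule assoc_mult_mat[OF c1 Wtc Vc, symmetric])
      also have "transpose_mat V * \<dots> = transpose_mat V * (transpose_mat Wt * S * Wt) * V"
        by (rule assoc_mult_mat[OF tc(1) _ Vc, symmetric]) (use c1 Wtc in simp)
      finally show ?thesis .
    qed
    also have "\<dots> = - (transpose_mat V * (transpose_mat W * S * W) * V)" unfolding G2 using tc Wc Sc Vc by simp
    also have "transpose_mat V * (transpose_mat W * S * W) * V = (transpose_mat V * transpose_mat W) * S * (W * V)"
    proof -
      have c1: "transpose_mat W * S \<in> carrier_mat n n" using tc Sc by simp
      have "transpose_mat V * (transpose_mat W * S * W) * V = transpose_mat V * ((transpose_mat W * S * W) * V)"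
        by (rule assoc_mult_mat[OF tc(1) _ Vc]) (use c1 Wc in simp)
      also have "(transpose_mat W * S * W) * V = (transpose_mat W * S) * (W * V)"
        by (rule assoc_mult_mat[OF c1 Wc Vc])
      also have "transpose_mat V * ((transpose_mat W * S) * (W * V)) = (transpose_mat V * (transpose_mat W * S)) * (W * V)"
        by (rule assoc_mult_mat[OF tc(1) c1 WVc(1), symmetric])
      also have "transpose_mat V * (transpose_mat W * S) = (transpose_mat V * transpose_mat W) * S"
        by (rule assoc_mult_mat[OF tc(1) tc(2) Sc, symmetric])
      finally show ?thesis .
    qed
    finally show ?thesis unfolding tWV WV using Sc by simp
  qed
  have reg: "Q0 *\<^sub>v e = e"
  proof (cases "n = 0")
    case True thus ?thesis using Qc ec by (intro eq_vecI) auto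
  next
    case False
    hence n: "0 < n" by simp
    have e0: "col W 0 = e" using cols[OF n] wv_0[OF Sc St ec] by simp
    have "Q0 *\<^sub>v col W 0 = col (Q0 * W) 0" by (rule col_mult2[symmetric, OF Qc Wc n])
    thus ?thesis unfolding QW e0 using cols[OF n] wv_0[OF Sc St ec] by simp
  qed
  have conv_og: "oriented_graph n (converse_og A)" using og unfolding oriented_graph_def converse_og_def by blast
  have cosp: "gen_cospectral n A (converse_og A)"
  proof -
    have 1: "skew_adj n (converse_og A) = transpose_mat S" unfolding S_def by (rule skew_conv)
    have 2: "J_mat n - 1\<^sub>m n - transpose_mat S = transpose_mat (J_mat n - 1\<^sub>m n - S)"
      using Sc by (intro eq_matI) (auto simp: J_mat_def)
    have 3: "J_mat n - 1\<^sub>m n - S \<in> carrier_mat n n" using Sc unfolding J_mat_def by auto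
    show ?thesis unfolding gen_cospectral_def 1 S_def[symmetric] 2
      using Sc char_poly_transpose_mat[OF 3] by simp
  qed
  have skew': "transpose_mat Q0 * skew_adj n A * Q0 = skew_adj n (converse_og A)"
    unfolding S_def[symmetric] Sconv by (rule skew)
  have Q0in: "Q0 \<in> QSet n A \<and> transpose_mat Q0 * skew_adj n A * Q0 = skew_adj n (converse_og A)"
  proof (intro conjI skew')
    have "orth_mat n Q0" unfolding orth_mat_def using Qc orth by simp
    moreover have "regular_mat n Q0" unfolding regular_mat_def e_def[symmetric] by (rule reg)
    ultimately show "Q0 \<in> QSet n A" unfolding QSet_def using rQ conv_og cosp skew' by blast
  qed
  have uniq: "Q = Q0" if Q: "Q \<in> QSet n A" "transpose_mat Q * skew_adj n A * Q = skew_adj n (converse_og A)" for Q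
  proof -
    have Qc': "Q \<in> carrier_mat n n" and QtQ: "transpose_mat Q * Q = 1\<^sub>m n" and rg: "Q *\<^sub>v e = e"
      using Q(1) unfolding QSet_def orth_mat_def regular_mat_def e_def by auto
    have QS: "transpose_mat Q * S * Q = - S" using Q(2) unfolding S_def[symmetric] Sconv .
    have QQt: "Q * transpose_mat Q = 1\<^sub>m n"
      by (rule mat_mult_left_right_inverse[OF _ Qc' QtQ]) (use Qc' in auto)
    have SQ: "Q * S = - (S * Q)"
    proof -
      have tQc: "transpose_mat Q \<in> carrier_mat n n" using Qc' by simp
      have c1: "transpose_mat Q * S \<in> carrier_mat n n" using tQc Sc by simp
      have "S * Q = (Q * transpose_mat Q) * S * Q" unfolding QQt using Sc Qc' by simp
      also have "(Q * transpose_mat Q) * S = Q * (transpose_mat Q * S)" by (rule assoc_mult_mat[OF Qc' tQc Sc])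
      also have "Q * (transpose_mat Q * S) * Q = Q * (transpose_mat Q * S * Q)" by (rule assoc_mult_mat[OF Qc' c1 Qc'])
      also have "\<dots> = - (Q * S)" unfolding QS using Sc Qc' by simp
      finally show ?thesis by simp
    qed
    have Qw: "Q *\<^sub>v wv S e k = (-1)^k \<cdot>\<^sub>v wv S e k" for k
    proof (induct k)
      case 0 thus ?case using rg wv_0[OF Sc St ec] by simp
    next
      case (Suc k)
      have "Q *\<^sub>v wv S e (Suc k) = (Q * S) *\<^sub>v wv S e k"
        unfolding wv_Suc[OF Sc St ec] using Qc' Sc wc[of k] by simp
      also have "\<dots> = - (S *\<^sub>v (Q *\<^sub>v wv S e k))" unfolding SQ using Qc' Sc wc[of k] by simp
      also have "\<dots> = - ((-1)^k \<cdot>\<^sub>v wv S e (Suc k))" unfolding Suc wv_Suc[OF Sc St ec]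
        using mult_mat_vec[OF Sc wc[of k]] by simp
      also have "\<dots> = (-1)^(Suc k) \<cdot>\<^sub>v wv S e (Suc k)" by (intro eq_vecI) auto
      finally show ?case .
    qed
    have QW': "Q * W = Wt"
    proof (rule mat_col_eqI)
      fix k assume "k < dim_col Wt"
      hence k: "k < n" using Wtc by simp
      have "col (Q * W) k = Q *\<^sub>v col W k" by (rule col_mult2[OF Qc' Wc k])
      thus "col (Q * W) k = col Wt k"
        unfolding cols[OF k, THEN conjunct1] Qw cols[OF k, THEN conjunct2] .
    qed (insert Qc' Wc Wtc, auto)
    have "Q = Q * (W * V)" unfolding WV using Qc' by simp
    also have "\<dots> = (Q * W) * V" using Qc' Wc Vc by simp
    finally show ?thesis unfolding QW' Q0_def .
  qed
  show ?thesis
  proof (rule conjI)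
    show "\<exists>!Q0. Q0 \<in> QSet n A \<and> transpose_mat Q0 * skew_adj n A * Q0 = skew_adj n (converse_og A)"
      by (rule ex1I[of _ Q0], rule Q0in, rule uniq, blast, blast)
  next
    show "\<not> iso_og n A (converse_og A) \<longrightarrow>
            (\<forall>Q0. Q0 \<in> QSet n A \<and>
               transpose_mat Q0 * skew_adj n A * Q0 = skew_adj n (converse_og A)
               \<longrightarrow> \<not> perm_matrix n Q0)"
      unfolding iso_og_def by blast
  qed
qed

end
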